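(* Let $G$ be a graph, $\mathcal{B}$ a set of balls of $G$, $X\subset V(G)$ and $\mathcal{H}$ the set of connected components of $G-X$. Let $u\in V(G)$, $B=B_r(u)\in\mathcal{B}$, and let $T$ be a positive non-clashing teaching map for $\mathcal{B}$. Suppose there exist $H_0\in\mathcal{H}$ and $v\in V(H_0)$ such that $|[v]_{\sim_{\mathcal{B}}}\cap T(B)|\ge 3$. Then there exists $z\in [v]_{\sim_{\mathcal{B}}}\cap T(B)$ such that the map obtained from $T$ by replacing $T(B)$ with $T(B)\setminus\{z\}$ is a positive non-clashing teaching map for $\mathcal{B}$.
   Context: For a graph $G$, $r\ge 0$ and $v\in V(G)$, the ball $B_r(v)$ is the set of vertices at distance at most $r$ from $v$. For a set $\mathcal{B}$ of balls, a positive teaching map $T$ assigns to each $B\in\mathcal{B}$ a set $T(B)\subseteq B$; $T$ is non-clashing for $\mathcal{B}$ if for every pair of distinct $B_1,B_2\in\mathcal{B}$ there is $w\in T(B_1)\cup T(B_2)$ with $w\notin B_1\cap B_2$. Two components $H,H'\in\mathcal{H}$ are twin-blocks, $H\sim_{\mathcal{B}}H'$, if there is an isomorphism $\alpha$ from $H$ to $H'$ such that (i) for each $u\in V(H)$ and $x\in X$, $ux\in E(G)$ iff $\alpha(u)x\in E(G)$, and (ii) for each $u\in V(H)$ and $r\in\mathbb{N}$, $B_r(u)\in\mathcal{B}$ iff $B_r(\alpha(u))\in\mathcal{B}$. For each pair $H\sim_{\mathcal{B}}H'$ one such isomorphism $\alpha_{H,H'}$ is fixed (the canonical isomorphism). For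 $v\in V(H)$, $[v]_{\sim_{\mathcal{B}}}=\{\alpha_{H,H'}(v) : H'\sim_{\mathcal{B}}H\}$. *)

theory Defs
  imports Main
begin

definition graph :: "'a set \<Rightarrow> ('a \<Rightarrow> 'a \<Rightarrow> bool) \<Rightarrow> bool" where
  "graph V E \<longleftrightarrow> (\<forall>x y. E x y \<longrightarrow> x \<in> V \<and> y \<in> V) \<and>
                   (\<forall>x y. E x y \<longrightarrow> E y x) \<and> (\<forall>x. \<not> E x x)"

definition walk_in :: "'a set \<Rightarrow> ('a \<Rightarrow> 'a \<Rightarrow> bool) \<Rightarrow> 'a list \<Rightarrow> bool" where
  "walk_in S E p \<longleftrightarrow> p \<noteq> [] \<and> set p \<subseteq> S \<and>
                      (\<forall>i < length p - 1. E (p ! i) (p ! Suc i))"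

definition ball :: "'a set \<Rightarrow> ('a \<Rightarrow> 'a \<Rightarrow> bool) \<Rightarrow> nat \<Rightarrow> 'a \<Rightarrow> 'a set" where
  "ball V E r v = {w. \<exists>p. walk_in V E p \<and> hd p = v \<and> last p = w \<and> length p \<le> r + 1}"

definition balls :: "'a set \<Rightarrow> ('a \<Rightarrow> 'a \<Rightarrow> bool) \<Rightarrow> 'a set set" where
  "balls V E = {ball V E r v | r v. v \<in> V}"

definition connected_in :: "'a set \<Rightarrow> ('a \<Rightarrow> 'a \<Rightarrow> bool) \<Rightarrow> 'a \<Rightarrow> 'a \<Rightarrow> bool" where
  "connected_in S E x y \<longleftrightarrow> (\<exists>p. walk_in S E p \<and> hd p = x \<and> last p = y)"

definition components :: "'a set \<Rightarrow> ('a \<Rightarrow> 'a \<Rightarrow> bool) \<Rightarrow> 'a set \<Rightarrow> 'a set set" where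
  "components V E X = {{y. connected_in (V - X) E x y} | x. x \<in> V - X}"

text \<open>alpha is an isomorphism from component H to H' witnessing H ~_B H'.\<close>
definition twin_iso :: "'a set \<Rightarrow> ('a \<Rightarrow> 'a \<Rightarrow> bool) \<Rightarrow> 'a set \<Rightarrow> 'a set set
    \<Rightarrow> 'a set \<Rightarrow> 'a set \<Rightarrow> ('a \<Rightarrow> 'a) \<Rightarrow> bool" where
  "twin_iso V E X \<B> H H' \<alpha> \<longleftrightarrow>
     bij_betw \<alpha> H H' \<and>
     (\<forall>a\<in>H. \<forall>b\<in>H. E a b \<longleftrightarrow> E (\<alpha> a) (\<alpha> b)) \<and>
     (\<forall>a\<in>H. \<forall>x\<in>X. E a x \<longleftrightarrow> E (\<alpha> a) x) \<and>
     (\<forall>a\<in>H. \<forall>r. ball V E r a \<in> \<B> \<longleftrightarrow> ball V E r (\<alpha> a) \<in> \<B>)"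

definition twin_blocks :: "'a set \<Rightarrow> ('a \<Rightarrow> 'a \<Rightarrow> bool) \<Rightarrow> 'a set \<Rightarrow> 'a set set
    \<Rightarrow> 'a set \<Rightarrow> 'a set \<Rightarrow> bool" where
  "twin_blocks V E X \<B> H H' \<longleftrightarrow>
     H \<in> components V E X \<and> H' \<in> components V E X \<and> (\<exists>\<alpha>. twin_iso V E X \<B> H H' \<alpha>)"

definition canonical_isos :: "'a set \<Rightarrow> ('a \<Rightarrow> 'a \<Rightarrow> bool) \<Rightarrow> 'a set \<Rightarrow> 'a set set
    \<Rightarrow> ('a set \<Rightarrow> 'a set \<Rightarrow> 'a \<Rightarrow> 'a) \<Rightarrow> bool" where
  "canonical_isos V E X \<B> canon \<longleftrightarrow>
     (\<forall>H H'. twin_blocks V E X \<B> H H' \<longrightarrow> twin_iso V E X \<B> H H' (canon H H'))"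

definition twin_class :: "'a set \<Rightarrow> ('a \<Rightarrow> 'a \<Rightarrow> bool) \<Rightarrow> 'a set \<Rightarrow> 'a set set
    \<Rightarrow> ('a set \<Rightarrow> 'a set \<Rightarrow> 'a \<Rightarrow> 'a) \<Rightarrow> 'a set \<Rightarrow> 'a \<Rightarrow> 'a set" where
  "twin_class V E X \<B> canon H v = {canon H H' v | H'. twin_blocks V E X \<B> H H'}"

definition positive_teaching :: "'a set set \<Rightarrow> ('a set \<Rightarrow> 'a set) \<Rightarrow> bool" where
  "positive_teaching \<B> T \<longleftrightarrow> (\<forall>B\<in>\<B>. T B \<subseteq> B)"

definition non_clashing :: "'a set set \<Rightarrow> ('a set \<Rightarrow> 'a set) \<Rightarrow> bool" where
  "non_clashing \<B> T \<longleftrightarrow>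
     (\<forall>B1\<in>\<B>. \<forall>B2\<in>\<B>. B1 \<noteq> B2 \<longrightarrow> (\<exists>w \<in> T B1 \<union> T B2. w \<notin> B1 \<inter> B2))"

end

theory Submission imports Defs begin

fun wk :: "'a set \<Rightarrow> ('a \<Rightarrow> 'a \<Rightarrow> bool) \<Rightarrow> 'a list \<Rightarrow> bool" where
  "wk S E [] = False"
| "wk S E [x] = (x \<in> S)"
| "wk S E (x # y # p) = (x \<in> S \<and> E x y \<and> wk S E (y # p))"

lemma walk_wk: "walk_in S E p \<longleftrightarrow> wk S E p"
proof (induction S E p rule: wk.induct)
  case (1 S E) then show ?case by (simp add: walk_in_def)
next
  case (2 S E x) then show ?case by (simp add: walk_in_def)
next
  case (3 S E x y p)
  have "(\<forall>i < length (x#y#p) - 1. E ((x#y#p) ! i) ((x#y#p) ! Suc i)) \<longleftrightarrow>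
        E x y \<and> (\<forall>i < length (y#p) - 1. E ((y#p) ! i) ((y#p) ! Suc i))"
    apply (auto simp: less_Suc_eq_0_disj)
    done
  then show ?case using 3 by (auto simp: walk_in_def)
qed

lemma wk_snoc: "wk S E q \<Longrightarrow> E (last q) x \<Longrightarrow> x \<in> S \<Longrightarrow> wk S E (q @ [x])"
  by (induction S E q rule: wk.induct) auto

lemma wk_hd: "wk S E q \<Longrightarrow> q \<noteq> []"
  by (cases q) auto

lemma wk_append: "wk S E p \<Longrightarrow> wk S E q \<Longrightarrow> last p = hd q \<Longrightarrow> wk S E (p @ tl q)"
proof (induction S E p rule: wk.induct)
  case (2 S E x) then show ?case by (cases q) auto
qed auto

lemma wk_rev:
  assumes "wk S E p" and sy: "\<forall>a b. E a b \<longrightarrow> E b a" shows "wk S E (rev p)"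
  using assms(1)
proof (induction p rule: induct_list012)
  case (3 x y p)
  have "wk S E (rev (y#p))" using 3 by simp
  moreover have "last (rev (y#p)) = y" by simp
  moreover have "E y x" "x \<in> S" using 3(3) sy by auto
  ultimately show ?case using wk_snoc[of S E "rev (y#p)" x] by simp
qed simp_all

lemma wk_set: "wk S E p \<Longrightarrow> set p \<subseteq> S"
  by (induction S E p rule: wk.induct) auto

lemma conn_sym: assumes "connected_in S E x y" "\<forall>a b. E a b \<longrightarrow> E b a" shows "connected_in S E y x"
proof -
  obtain p where p: "wk S E p" "hd p = x" "last p = y" using assms(1) unfolding connected_in_def walk_wk by blast
  have ne: "p \<noteq> []" using wk_hd[OF p(1)] .
  have "wk S E (rev p)" using wk_rev[OF p(1) assms(2)] .
  moreover have "hd (rev p) = y" using ne p(3) by (simp add: hd_rev)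
  moreover have "last (rev p) = x" using ne p(2) by (simp add: last_rev)
  ultimately show ?thesis unfolding connected_in_def walk_wk by blast
qed

lemma conn_trans: assumes "connected_in S E x y" "connected_in S E y z" shows "connected_in S E x z"
proof -
  obtain p where p: "wk S E p" "hd p = x" "last p = y" using assms(1) unfolding connected_in_def walk_wk by blast
  obtain q where q: "wk S E q" "hd q = y" "last q = z" using assms(2) unfolding connected_in_def walk_wk by blast
  have pn: "p \<noteq> []" using wk_hd[OF p(1)] .
  have qn: "q \<noteq> []" using wk_hd[OF q(1)] .
  have "wk S E (p @ tl q)" using wk_append[OF p(1) q(1)] p(3) q(2) by simp
  moreover have "hd (p @ tl q) = x" using pn p(2) by simp
  moreover have "last (p @ tl q) = z"
  proof (cases "tl q = []")
    case True
    then have "q = [y]" using qn q(2) by (cases q) auto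
    then show ?thesis using True p(3) q(3) by simp
  next
    case False
    then show ?thesis using q(3) qn by (simp add: last_tl)
  qed
  ultimately show ?thesis unfolding connected_in_def walk_wk by blast
qed

lemma wk_map:
  assumes "wk V E p" and a2: "\<forall>a\<in>H. \<forall>b\<in>H. E a b \<longrightarrow> E (\<beta> a) (\<beta> b)"
    and a3: "\<forall>a\<in>H. \<forall>x\<in>X. E a x \<longrightarrow> E (\<beta> a) x" and a4: "\<forall>a b. E a b \<longrightarrow> E b a"
    and a5: "\<forall>a b. a \<in> H \<longrightarrow> b \<in> V \<longrightarrow> E b a \<longrightarrow> b \<notin> X \<longrightarrow> b \<in> H"
    and a6: "\<beta> ` H \<subseteq> V"
  shows "wk V E (map (\<lambda>w. if w \<in> H then \<beta> w else w) p)"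
  using assms(1)
proof (induction p rule: induct_list012)
  case 1 then show ?case by simp
next
  case (2 x) then show ?case using a6 by (auto simp: image_subset_iff)
next
  case (3 x y p)
  have ih: "wk V E (map (\<lambda>w. if w \<in> H then \<beta> w else w) (y # p))" using 3 by simp
  have xS: "x \<in> V" "E x y" "y \<in> V" using 3(3) by (auto dest: wk_set)
  have "E (if x \<in> H then \<beta> x else x) (if y \<in> H then \<beta> y else y)"
  proof (cases "x \<in> H")
    case True
    show ?thesis
    proof (cases "y \<in> H")
      case True
      then show ?thesis using \<open>x \<in> H\<close> a2 xS by simp
    next
      case False
      have "E y x" using a4 xS by blast
      then have "y \<in> X" using a5 xS \<open>x \<in> H\<close> False by blast
      then show ?thesis using a3 xS \<open>x \<in> H\<close> False by simp
    qed
  next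
    case False
    show ?thesis
    proof (cases "y \<in> H")
      case True
      then have "x \<in> X" using a5 xS False by blast
      have "E y x" using a4 xS by blast
      then have "E (\<beta> y) x" using a3 \<open>x \<in> X\<close> True by blast
      then show ?thesis using a4 False True by simp
    next
      case False
      then show ?thesis using \<open>x \<notin> H\<close> xS by simp
    qed
  qed
  moreover have "(if x \<in> H then \<beta> x else x) \<in> V" using xS a6 by auto
  ultimately show ?case using ih by simp
qed

lemma graph_sym: "graph V E \<Longrightarrow> \<forall>a b. E a b \<longrightarrow> E b a"
  unfolding graph_def by blast

lemma comp_sub: assumes "H \<in> components V E X" shows "H \<subseteq> V - X"
proof
  fix y assume "y \<in> H"
  then obtain x where "H = {y. connected_in (V - X) E x y}" using assms unfolding components_def by blast
  then obtain p where "wk (V - X) E p" "last p = y" using \<open>y \<in> H\<close> unfolding connected_in_def walk_wk by blast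
  moreover have "p \<noteq> []" using wk_hd[OF \<open>wk (V - X) E p\<close>] .
  ultimately show "y \<in> V - X" using wk_set[OF \<open>wk (V - X) E p\<close>] last_in_set by blast
qed

lemma comp_closed: assumes "H \<in> components V E X" "graph V E" "a \<in> H" "b \<in> V" "E b a" "b \<notin> X"
  shows "b \<in> H"
proof -
  obtain x where H: "H = {y. connected_in (V - X) E x y}" using assms unfolding components_def by blast
  then obtain p where p: "wk (V - X) E p" "hd p = x" "last p = a" using assms(3) unfolding connected_in_def walk_wk by blast
  have "E a b" using graph_sym[OF assms(2)] assms(5) by blast
  then have "wk (V - X) E (p @ [b])" using wk_snoc[OF p(1)] p(3) assms(4,6) by simp
  moreover have "hd (p @ [b]) = x" using p(2) wk_hd[OF p(1)] by simp
  ultimately have "connected_in (V - X) E x b" unfolding connected_in_def walk_wk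
    by (metis last_snoc)
  then show ?thesis using H by blast
qed

lemma comp_disj: assumes "H \<in> components V E X" "H' \<in> components V E X" "graph V E" "c \<in> H" "c \<in> H'"
  shows "H = H'"
proof -
  have sy: "\<forall>a b. E a b \<longrightarrow> E b a" using graph_sym[OF assms(3)] .
  obtain x where H: "H = {y. connected_in (V - X) E x y}" using assms unfolding components_def by blast
  obtain x' where H': "H' = {y. connected_in (V - X) E x' y}" using assms unfolding components_def by blast
  have 1: "connected_in (V - X) E x c" "connected_in (V - X) E x' c" using assms(4,5) H H' by auto
  have "connected_in (V - X) E x x'" using conn_trans[OF 1(1) conn_sym[OF 1(2) sy]] .
  moreover have "connected_in (V - X) E x' x" using conn_trans[OF 1(2) conn_sym[OF 1(1) sy]] .
  ultimately have "\<forall>y. connected_in (V - X) E x y \<longleftrightarrow> connected_in (V - X) E x' y"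
    using conn_trans by metis
  then show ?thesis using H H' by simp
qed

lemma dist_twin:
  assumes g: "graph V E" and ci: "canonical_isos V E X \<B> canon"
    and ti: "twin_blocks V E X \<B> H0 Hi" and tj: "twin_blocks V E X \<B> H0 Hj"
    and v: "v \<in> H0" and c: "c \<notin> Hj" and inb: "canon H0 Hj v \<in> ball V E r c"
  shows "canon H0 Hi v \<in> ball V E r c"
proof -
  define ai where "ai = canon H0 Hi"
  define aj where "aj = canon H0 Hj"
  have isoi: "twin_iso V E X \<B> H0 Hi ai" using ci ti unfolding canonical_isos_def ai_def by blast
  have isoj: "twin_iso V E X \<B> H0 Hj aj" using ci tj unfolding canonical_isos_def aj_def by blast
  have bi: "bij_betw ai H0 Hi" and bj: "bij_betw aj H0 Hj" using isoi isoj unfolding twin_iso_def by auto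
  have Ei: "\<forall>a\<in>H0. \<forall>b\<in>H0. E a b \<longleftrightarrow> E (ai a) (ai b)" "\<forall>a\<in>H0. \<forall>x\<in>X. E a x \<longleftrightarrow> E (ai a) x"
    using isoi unfolding twin_iso_def by auto
  have Ej: "\<forall>a\<in>H0. \<forall>b\<in>H0. E a b \<longleftrightarrow> E (aj a) (aj b)" "\<forall>a\<in>H0. \<forall>x\<in>X. E a x \<longleftrightarrow> E (aj a) x"
    using isoj unfolding twin_iso_def by auto
  have HiC: "Hi \<in> components V E X" and HjC: "Hj \<in> components V E X"
    using ti tj unfolding twin_blocks_def by auto
  define inv where "inv = inv_into H0 aj"
  define \<beta> where "\<beta> = (\<lambda>a. ai (inv a))"
  have inv_in: "inv a \<in> H0" if "a \<in> Hj" for a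
    using that bj unfolding inv_def bij_betw_def by (metis inv_into_into)
  have inv_f: "aj (inv a) = a" if "a \<in> Hj" for a
    using that bj unfolding inv_def bij_betw_def by (metis f_inv_into_f)
  have a2: "\<forall>a\<in>Hj. \<forall>b\<in>Hj. E a b \<longrightarrow> E (\<beta> a) (\<beta> b)"
  proof (intro ballI impI)
    fix a b assume "a \<in> Hj" "b \<in> Hj" "E a b"
    then have "E (aj (inv a)) (aj (inv b))" using inv_f by simp
    then have "E (inv a) (inv b)" using Ej(1) inv_in[OF \<open>a \<in> Hj\<close>] inv_in[OF \<open>b \<in> Hj\<close>] by simp
    then show "E (\<beta> a) (\<beta> b)" unfolding \<beta>_def using Ei(1) inv_in[OF \<open>a \<in> Hj\<close>] inv_in[OF \<open>b \<in> Hj\<close>] by simp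
  qed
  have a3: "\<forall>a\<in>Hj. \<forall>x\<in>X. E a x \<longrightarrow> E (\<beta> a) x"
  proof (intro ballI impI)
    fix a x assume "a \<in> Hj" "x \<in> X" "E a x"
    then have "E (aj (inv a)) x" using inv_f by simp
    then have "E (inv a) x" using Ej(2) inv_in[OF \<open>a \<in> Hj\<close>] \<open>x \<in> X\<close> by simp
    then show "E (\<beta> a) x" unfolding \<beta>_def using Ei(2) inv_in[OF \<open>a \<in> Hj\<close>] \<open>x \<in> X\<close> by simp
  qed
  have a5: "\<forall>a b. a \<in> Hj \<longrightarrow> b \<in> V \<longrightarrow> E b a \<longrightarrow> b \<notin> X \<longrightarrow> b \<in> Hj"
    using comp_closed[OF HjC g] by simp
  have a6: "\<beta> ` Hj \<subseteq> V"
  proof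
    fix y assume "y \<in> \<beta> ` Hj"
    then obtain a where "a \<in> Hj" "y = ai (inv a)" unfolding \<beta>_def by blast
    then have "y \<in> Hi" using inv_in bi unfolding bij_betw_def by blast
    then show "y \<in> V" using comp_sub[OF HiC] by blast
  qed
  have vj: "aj v \<in> Hj" using v bj unfolding bij_betw_def by blast
  have bv: "\<beta> (aj v) = ai v" unfolding \<beta>_def inv_def using v bj unfolding bij_betw_def
    by (simp add: inv_into_f_f)
  obtain p where p: "walk_in V E p" "hd p = c" "last p = aj v" "length p \<le> r + 1"
    using inb unfolding ball_def aj_def by blast
  define f where "f = (\<lambda>w. if w \<in> Hj then \<beta> w else w)"
  have wp: "wk V E p" using p(1) walk_wk by metis
  have ne: "p \<noteq> []" using wk_hd[OF wp] .
  have "wk V E (map f p)" unfolding f_def using wk_map[OF wp a2 a3 graph_sym[OF g] a5 a6] .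
  moreover have "hd (map f p) = c" using ne p(2) c unfolding f_def by (simp add: hd_map)
  moreover have "last (map f p) = ai v" using ne p(3) vj bv unfolding f_def by (simp add: last_map)
  moreover have "length (map f p) \<le> r + 1" using p(4) by simp
  ultimately show ?thesis unfolding ball_def ai_def walk_wk by blast
qed

theorem lemma9:
  fixes V :: "'a set" and E :: "'a \<Rightarrow> 'a \<Rightarrow> bool" and X :: "'a set"
    and \<B> :: "'a set set" and T :: "'a set \<Rightarrow> 'a set"
    and canon :: "'a set \<Rightarrow> 'a set \<Rightarrow> 'a \<Rightarrow> 'a"
    and u v :: 'a and r :: nat and B H0 :: "'a set"
  assumes "graph V E" and "finite V"
    and "X \<subseteq> V"
    and "\<B> \<subseteq> balls V E"
    and "canonical_isos V E X \<B> canon"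
    and "u \<in> V" and "B = ball V E r u" and "B \<in> \<B>"
    and "positive_teaching \<B> T" and "non_clashing \<B> T"
    and "H0 \<in> components V E X" and "v \<in> H0"
    and "card (twin_class V E X \<B> canon H0 v \<inter> T B) \<ge> 3"
  shows "\<exists>z \<in> twin_class V E X \<B> canon H0 v \<inter> T B.
           positive_teaching \<B> (T(B := T B - {z})) \<and>
           non_clashing \<B> (T(B := T B - {z}))"
proof -
  note g = assms(1) and ci = assms(5)
  define C where "C = twin_class V E X \<B> canon H0 v \<inter> T B"
  obtain S where "S \<subseteq> C" "card S = 3"
    using obtain_subset_with_card_n[of 3 C] assms(13) unfolding C_def by blast
  then obtain z1 z2 z3 where zs: "z1 \<in> C" "z2 \<in> C" "z3 \<in> C" "z1 \<noteq> z2" "z2 \<noteq> z3" "z1 \<noteq> z3"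
    unfolding card_3_iff by blast
  obtain H1 where H1: "z1 = canon H0 H1 v" "twin_blocks V E X \<B> H0 H1"
    using zs(1) unfolding C_def twin_class_def by blast
  obtain H2 where H2: "z2 = canon H0 H2 v" "twin_blocks V E X \<B> H0 H2"
    using zs(2) unfolding C_def twin_class_def by blast
  obtain H3 where H3: "z3 = canon H0 H3 v" "twin_blocks V E X \<B> H0 H3"
    using zs(3) unfolding C_def twin_class_def by blast
  have H23: "H2 \<noteq> H3" using H2 H3 zs(5) by blast
  have C23: "H2 \<in> components V E X" "H3 \<in> components V E X"
    using H2(2) H3(2) unfolding twin_blocks_def by auto
  have key: "z1 \<in> B'" if kB: "B' \<in> \<B>" "z2 \<in> B'" "z3 \<in> B'" for B'
  proof -
    obtain r' c where Bc: "B' = ball V E r' c" using kB(1) assms(4) unfolding balls_def by blast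
    show ?thesis
    proof (cases "c \<in> H2")
      case False
      show ?thesis using dist_twin[OF g ci H1(2) H2(2) assms(12) False] kB(2) Bc H1(1) H2(1) by simp
    next
      case True
      then have "c \<notin> H3" using comp_disj[OF C23 g] H23 by blast
      show ?thesis using dist_twin[OF g ci H1(2) H3(2) assms(12) \<open>c \<notin> H3\<close>] kB(3) Bc H1(1) H3(1) by simp
    qed
  qed
  define T' where "T' = T(B := T B - {z1})"
  have pos: "\<forall>B'\<in>\<B>. T B' \<subseteq> B'" using assms(9) unfolding positive_teaching_def .
  have nc: "\<forall>B1\<in>\<B>. \<forall>B2\<in>\<B>. B1 \<noteq> B2 \<longrightarrow> (\<exists>w \<in> T B1 \<union> T B2. w \<notin> B1 \<inter> B2)"
    using assms(10) unfolding non_clashing_def .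
  have zT: "z1 \<in> T B" "z2 \<in> T B" "z3 \<in> T B" using zs unfolding C_def by auto
  have zB: "z1 \<in> B" "z2 \<in> B" "z3 \<in> B" using zT pos assms(8) by auto
  have pair: "\<exists>w \<in> T' B \<union> T' B2. w \<notin> B \<inter> B2" if pB: "B2 \<in> \<B>" "B2 \<noteq> B" for B2
  proof -
    obtain w where w: "w \<in> T B \<union> T B2" "w \<notin> B \<inter> B2" using nc assms(8) pB by metis
    show ?thesis
    proof (cases "w = z1")
      case False
      then have "w \<in> T' B \<union> T' B2" using w(1) pB(2) unfolding T'_def by auto
      then show ?thesis using w(2) by blast
    next
      case True
      then have "z1 \<notin> B2" using w(2) zB by blast
      then have "z2 \<notin> B2 \<or> z3 \<notin> B2" using key pB(1) by blast
      moreover have "z2 \<in> T' B" "z3 \<in> T' B" using zT zs unfolding T'_def by auto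
      ultimately show ?thesis by blast
    qed
  qed
  have "positive_teaching \<B> T'"
    unfolding positive_teaching_def T'_def using pos by auto
  moreover have "non_clashing \<B> T'"
    unfolding non_clashing_def
  proof (intro ballI impI)
    fix B1 B2 assume b: "B1 \<in> \<B>" "B2 \<in> \<B>" "B1 \<noteq> B2"
    show "\<exists>w \<in> T' B1 \<union> T' B2. w \<notin> B1 \<inter> B2"
    proof (cases "B1 = B")
      case True
      then show ?thesis using pair b by blast
    next
      case False
      show ?thesis
      proof (cases "B2 = B")
        case True
        then show ?thesis using pair[of B1] b False by (simp add: Un_commute Int_commute)
      next
        case False
        then have "T' B1 = T B1" "T' B2 = T B2" using \<open>B1 \<noteq> B\<close> unfolding T'_def by auto
        then show ?thesis using nc b by simp
      qed
    qed
  qed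
  ultimately show ?thesis using zs(1) unfolding C_def T'_def by blast
qed

end
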